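(* Let $\phi:\mathbb{R}\to\mathbb{R}$ be any bounded loss function. Fix a true label vector $\mathbf{y}\in\{-1,+1\}^q$ and a score vector $\mathbf t\in\mathbb R^q$. If $\tilde{\mathbf y}$ is generated from $\mathbf y$ by the class-conditional multi-label noise model, then $$\mathbb{E}_{\tilde{\mathbf y}\mid\mathbf y}\big[\tilde{\mathcal L}_r(\mathbf t,\tilde{\mathbf y})\big]=\mathcal L_r(\mathbf t,\mathbf y).$$
   Context: Fix $q\ge 2$, $[q]=\{1,\dots,q\}$, label vectors $\mathbf y\in\{-1,+1\}^q$. For each $j\in[q]$ there are noise rates $\rho^j_{+1},\rho^j_{-1}\in[0,1)$ with $\rho^j_{+1}+\rho^j_{-1}<1$. Class-conditional multi-label noise model: given $\mathbf y$, each coordinate is flipped independently, $\Pr(\tilde y_j=-y_j\mid\mathbf y)=\rho^j_{y_j}$, $\Pr(\tilde y_j=y_j\mid\mathbf y)=1-\rho^j_{y_j}$, flips for different $j$ independent. Let $\kappa_j=1/(1-\rho^j_{+1}-\rho^j_{-1})$ and $\kappa_{jk}=\kappa_j\kappa_k$. The pairwise surrogate is $$\mathcal L_r(\mathbf t,\mathbf y)=\sum_{1\le j<k\le q}\Big[\mathbb 1(y_j=+1,y_k=-1)\,\phi(t_j-t_k)+\mathbb 1(y_j=-1,y_k=+1)\,\phi(t_k-t_j)\Big]$$ (pairs with $y_j=y_k$ contribute $0$). For $j<k$, $s\in\mathbb R$, $a,b\in\{-1,+1\}$ define $\tilde\psi_{jk}(s;a,b)$ by $\tilde\psi_{jk}(s;+1,-1)=\kappa_{jk}[(1-\rho^j_{-1})(1-\rho^k_{+1})\phi(s)+\rho^j_{+1}\rho^k_{-1}\phi(-s)]$;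 $\tilde\psi_{jk}(s;-1,+1)=\kappa_{jk}[(1-\rho^j_{+1})(1-\rho^k_{-1})\phi(-s)+\rho^j_{-1}\rho^k_{+1}\phi(s)]$; $\tilde\psi_{jk}(s;+1,+1)=-\kappa_{jk}[\rho^j_{+1}(1-\rho^k_{-1})\phi(-s)+\rho^k_{+1}(1-\rho^j_{-1})\phi(s)]$; $\tilde\psi_{jk}(s;-1,-1)=-\kappa_{jk}[\rho^j_{-1}(1-\rho^k_{+1})\phi(s)+\rho^k_{-1}(1-\rho^j_{+1})\phi(-s)]$. The modified loss is $\tilde{\mathcal L}_r(\mathbf t,\tilde{\mathbf y})=\sum_{1\le j<k\le q}\tilde\psi_{jk}(t_j-t_k;\tilde y_j,\tilde y_k)$. *)

theory Defs
  imports "HOL-Analysis.Analysis"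
begin

(* Label vectors y \<in> {-1,+1}^q are represented as functions nat \<Rightarrow> int on
   the index set {1..q}, extensional (value undefined outside {1..q}).
   Noise rates: rho a j = \<rho>^j_a for a \<in> {-1,+1}, j \<in> {1..q}. *)

definition label_vectors :: "nat \<Rightarrow> (nat \<Rightarrow> int) set" where
  "label_vectors q = PiE {1..q} (\<lambda>_. {-1, 1})"

definition noise_prob :: "nat \<Rightarrow> (int \<Rightarrow> nat \<Rightarrow> real) \<Rightarrow> (nat \<Rightarrow> int) \<Rightarrow> (nat \<Rightarrow> int) \<Rightarrow> real" where
  "noise_prob q rho y yt =
     (\<Prod>j\<in>{1..q}. if yt j = y j then 1 - rho (y j) j else rho (y j) j)"

definition kappa :: "(int \<Rightarrow> nat \<Rightarrow> real) \<Rightarrow> nat \<Rightarrow> real" where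
  "kappa rho j = 1 / (1 - rho 1 j - rho (-1) j)"

definition L_r :: "nat \<Rightarrow> (real \<Rightarrow> real) \<Rightarrow> (nat \<Rightarrow> real) \<Rightarrow> (nat \<Rightarrow> int) \<Rightarrow> real" where
  "L_r q \<phi> t y =
     (\<Sum>(j,k)\<in>{(j,k). 1 \<le> j \<and> j < k \<and> k \<le> q}.
        (if y j = 1 \<and> y k = -1 then \<phi> (t j - t k) else 0)
      + (if y j = -1 \<and> y k = 1 then \<phi> (t k - t j) else 0))"

definition psi_tilde :: "(real \<Rightarrow> real) \<Rightarrow> (int \<Rightarrow> nat \<Rightarrow> real) \<Rightarrow> nat \<Rightarrow> nat \<Rightarrow> real \<Rightarrow> int \<Rightarrow> int \<Rightarrow> real" where
  "psi_tilde \<phi> rho j k s a b =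
     (let kjk = kappa rho j * kappa rho k in
      if a = 1 \<and> b = -1 then
        kjk * ((1 - rho (-1) j) * (1 - rho 1 k) * \<phi> s + rho 1 j * rho (-1) k * \<phi> (-s))
      else if a = -1 \<and> b = 1 then
        kjk * ((1 - rho 1 j) * (1 - rho (-1) k) * \<phi> (-s) + rho (-1) j * rho 1 k * \<phi> s)
      else if a = 1 \<and> b = 1 then
        - kjk * (rho 1 j * (1 - rho (-1) k) * \<phi> (-s) + rho 1 k * (1 - rho (-1) j) * \<phi> s)
      else
        - kjk * (rho (-1) j * (1 - rho 1 k) * \<phi> s + rho (-1) k * (1 - rho 1 j) * \<phi> (-s)))"

definition L_r_tilde :: "nat \<Rightarrow> (real \<Rightarrow> real) \<Rightarrow> (int \<Rightarrow> nat \<Rightarrow> real) \<Rightarrow> (nat \<Rightarrow> real) \<Rightarrow> (nat \<Rightarrow> int) \<Rightarrow> real" where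
  "L_r_tilde q \<phi> rho t yt =
     (\<Sum>(j,k)\<in>{(j,k). 1 \<le> j \<and> j < k \<and> k \<le> q}. psi_tilde \<phi> rho j k (t j - t k) (yt j) (yt k))"

end

theory Submission
  imports Defs
begin

definition G :: "(int \<Rightarrow> nat \<Rightarrow> real) \<Rightarrow> nat \<Rightarrow> int \<Rightarrow> int \<Rightarrow> real" where
  "G rho i yi v = (if v = yi then 1 - rho yi i else rho yi i)"

definition psi0 :: "(real \<Rightarrow> real) \<Rightarrow> (int \<Rightarrow> nat \<Rightarrow> real) \<Rightarrow> nat \<Rightarrow> nat \<Rightarrow> real \<Rightarrow> int \<Rightarrow> int \<Rightarrow> real" where
  "psi0 \<phi> rho j k s a b =
     (if a = 1 \<and> b = -1 then
        ((1 - rho (-1) j) * (1 - rho 1 k) * \<phi> s + rho 1 j * rho (-1) k * \<phi> (-s))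
      else if a = -1 \<and> b = 1 then
        ((1 - rho 1 j) * (1 - rho (-1) k) * \<phi> (-s) + rho (-1) j * rho 1 k * \<phi> s)
      else if a = 1 \<and> b = 1 then
        - (rho 1 j * (1 - rho (-1) k) * \<phi> (-s) + rho 1 k * (1 - rho (-1) j) * \<phi> s)
      else
        - (rho (-1) j * (1 - rho 1 k) * \<phi> s + rho (-1) k * (1 - rho 1 j) * \<phi> (-s)))"

lemma psi_eq: "psi_tilde \<phi> rho j k s a b = kappa rho j * kappa rho k * psi0 \<phi> rho j k s a b"
  by (auto simp: psi_tilde_def psi0_def Let_def algebra_simps)

lemma poly_id:
  assumes "yj \<in> {-1,1}" "yk \<in> {-1,1}"
  shows "(\<Sum>a\<in>{-1,1}. \<Sum>b\<in>{-1,1}. G rho j yj a * G rho k yk b * psi0 \<phi> rho j k s a b)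
     = ((1 - rho 1 j - rho (-1) j) * (1 - rho 1 k - rho (-1) k)) *
       ((if yj = 1 \<and> yk = -1 then \<phi> s else 0) + (if yj = -1 \<and> yk = 1 then \<phi> (-s) else 0))"
  using assms by (auto simp: G_def psi0_def algebra_simps)

lemma pair:
  assumes "rho 1 j + rho (-1) j \<noteq> 1" "rho 1 k + rho (-1) k \<noteq> 1" "yj \<in> {-1,1}" "yk \<in> {-1,1}"
  shows "(\<Sum>a\<in>{-1,1}. \<Sum>b\<in>{-1,1}. G rho j yj a * G rho k yk b * psi_tilde \<phi> rho j k s a b)
     = (if yj = 1 \<and> yk = -1 then \<phi> s else 0) + (if yj = -1 \<and> yk = 1 then \<phi> (-s) else 0)"
proof -
  have d1: "1 - rho 1 j - rho (-1) j \<noteq> 0" "1 - rho 1 k - rho (-1) k \<noteq> 0" using assms by auto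
  have "(\<Sum>a\<in>{-1,1}. \<Sum>b\<in>{-1,1}. G rho j yj a * G rho k yk b * psi_tilde \<phi> rho j k s a b)
    = (kappa rho j * kappa rho k) * (\<Sum>a\<in>{-1,1}. \<Sum>b\<in>{-1,1}. G rho j yj a * G rho k yk b * psi0 \<phi> rho j k s a b)"
    by (simp add: psi_eq algebra_simps)
  also have "\<dots> = (kappa rho j * kappa rho k) * ((1 - rho 1 j - rho (-1) j) * (1 - rho 1 k - rho (-1) k)) *
       ((if yj = 1 \<and> yk = -1 then \<phi> s else 0) + (if yj = -1 \<and> yk = 1 then \<phi> (-s) else 0))"
    by (subst poly_id[OF assms(3,4)]) (simp add: mult.assoc)
  also have "(kappa rho j * kappa rho k) * ((1 - rho 1 j - rho (-1) j) * (1 - rho 1 k - rho (-1) k)) = 1"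
    using d1 by (simp add: kappa_def)
  finally show ?thesis by simp
qed

lemma marg:
  assumes y: "y \<in> label_vectors q" and jk: "j \<in> {1..q}" "k \<in> {1..q}" "j \<noteq> k"
    and ab: "a \<in> {-1,1}" "b \<in> {-1,1}"
  shows "(\<Sum>yt\<in>label_vectors q. noise_prob q rho y yt * (if yt j = a \<and> yt k = b then 1 else 0))
       = G rho j (y j) a * G rho k (y k) b"
proof -
  define h where "h i v = G rho i (y i) v * (if i = j then (if v = a then 1 else 0) else 1)
      * (if i = k then (if v = b then 1 else 0) else 1)" for i v
  have "(\<Sum>yt\<in>label_vectors q. noise_prob q rho y yt * (if yt j = a \<and> yt k = b then 1 else 0))
      = (\<Sum>yt\<in>label_vectors q. \<Prod>i\<in>{1..q}. h i (yt i))"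
  proof (rule sum.cong)
    fix yt assume "yt \<in> label_vectors q"
    have "(\<Prod>i\<in>{1..q}. h i (yt i)) = (\<Prod>i\<in>{1..q}. G rho i (y i) (yt i))
      * (\<Prod>i\<in>{1..q}. (if i = j then (if yt i = a then 1 else 0) else 1))
      * (\<Prod>i\<in>{1..q}. (if i = k then (if yt i = b then 1 else 0) else 1))"
      unfolding h_def prod.distrib by simp
    also have "\<dots> = noise_prob q rho y yt * (if yt j = a \<and> yt k = b then 1 else 0)"
      using jk by (simp add: prod.delta noise_prob_def G_def)
    finally show "noise_prob q rho y yt * (if yt j = a \<and> yt k = b then 1 else 0) = (\<Prod>i\<in>{1..q}. h i (yt i))" by simp
  qed simp
  also have "\<dots> = (\<Prod>i\<in>{1..q}. \<Sum>v\<in>{-1,1}. h i v)"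
    unfolding label_vectors_def by (rule prod_sum_PiE[symmetric]) auto
  also have "\<dots> = (\<Prod>i\<in>{1..q}. (if i = j then G rho j (y j) a else 1) * (if i = k then G rho k (y k) b else 1))"
  proof (rule prod.cong)
    fix i assume i: "i \<in> {1..q}"
    have yi: "y i \<in> {-1,1}" using y i unfolding label_vectors_def by (auto simp: PiE_iff)
    show "(\<Sum>v\<in>{-1,1}. h i v) = (if i = j then G rho j (y j) a else 1) * (if i = k then G rho k (y k) b else 1)"
    proof -
      have s: "(\<Sum>v\<in>{-1,1}. h i v) = h i (-1) + h i 1" by simp
      consider "i = j" | "i = k" | "i \<noteq> j" "i \<noteq> k" by blast
      then show ?thesis
      proof cases
        case 1
        then have "i \<noteq> k" using jk(3) by simp
        then show ?thesis using 1 ab(1) unfolding s h_def by auto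
      next
        case 2
        then have "i \<noteq> j" using jk(3) by simp
        then show ?thesis using 2 ab(2) unfolding s h_def by auto
      next
        case 3
        then show ?thesis using yi unfolding s h_def G_def by auto
      qed
    qed
  qed simp
  also have "\<dots> = G rho j (y j) a * G rho k (y k) b"
    using jk by (simp add: prod.distrib prod.delta)
  finally show ?thesis .
qed

lemma per_pair:
  assumes y: "y \<in> label_vectors q" and jk: "j \<in> {1..q}" "k \<in> {1..q}" "j \<noteq> k"
  shows "(\<Sum>yt\<in>label_vectors q. noise_prob q rho y yt * psi_tilde \<phi> rho j k s (yt j) (yt k))
    = (\<Sum>a\<in>{-1,1}. \<Sum>b\<in>{-1,1}. G rho j (y j) a * G rho k (y k) b * psi_tilde \<phi> rho j k s a b)"
proof -
  have "(\<Sum>yt\<in>label_vectors q. noise_prob q rho y yt * psi_tilde \<phi> rho j k s (yt j) (yt k))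
     = (\<Sum>yt\<in>label_vectors q. \<Sum>a\<in>{-1,1}. \<Sum>b\<in>{-1,1}.
          psi_tilde \<phi> rho j k s a b * (noise_prob q rho y yt * (if yt j = a \<and> yt k = b then 1 else 0)))"
  proof (rule sum.cong)
    fix yt assume yt: "yt \<in> label_vectors q"
    have "yt j \<in> {-1,1}" "yt k \<in> {-1,1}" using yt jk unfolding label_vectors_def by (auto simp: PiE_iff)
    then show "noise_prob q rho y yt * psi_tilde \<phi> rho j k s (yt j) (yt k) = (\<Sum>a\<in>{-1,1}. \<Sum>b\<in>{-1,1}.
          psi_tilde \<phi> rho j k s a b * (noise_prob q rho y yt * (if yt j = a \<and> yt k = b then 1 else 0)))"
      by (elim insertE; simp)
  qed simp
  also have "\<dots> = (\<Sum>a\<in>{-1,1}. \<Sum>b\<in>{-1,1}. psi_tilde \<phi> rho j k s a b *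
      (\<Sum>yt\<in>label_vectors q. noise_prob q rho y yt * (if yt j = a \<and> yt k = b then 1 else 0)))"
    by (simp add: sum_distrib_left sum.swap[of _ "label_vectors q"])
  also have "\<dots> = (\<Sum>a\<in>{-1,1}. \<Sum>b\<in>{-1,1}. G rho j (y j) a * G rho k (y k) b * psi_tilde \<phi> rho j k s a b)"
    by (intro sum.cong refl) (simp add: marg[OF y jk])
  finally show ?thesis .
qed

theorem lemma2:
  fixes q :: nat and \<phi> :: "real \<Rightarrow> real" and rho :: "int \<Rightarrow> nat \<Rightarrow> real"
    and y :: "nat \<Rightarrow> int" and t :: "nat \<Rightarrow> real"
  assumes q: "q \<ge> 2"
    and bounded: "bounded (range \<phi>)"
    and rho_nonneg: "\<And>j a. j \<in> {1..q} \<Longrightarrow> a \<in> {-1, 1} \<Longrightarrow> 0 \<le> rho a j"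
    and rho_lt1: "\<And>j a. j \<in> {1..q} \<Longrightarrow> a \<in> {-1, 1} \<Longrightarrow> rho a j < 1"
    and rho_sum: "\<And>j. j \<in> {1..q} \<Longrightarrow> rho 1 j + rho (-1) j < 1"
    and y: "y \<in> label_vectors q"
  shows "(\<Sum>yt\<in>label_vectors q. noise_prob q rho y yt * L_r_tilde q \<phi> rho t yt) = L_r q \<phi> t y"
proof -
  let ?S = "{(j,k). 1 \<le> j \<and> j < k \<and> k \<le> (q::nat)}"
  have finS: "finite ?S" by (rule finite_subset[of _ "{1..q} \<times> {1..q}"]) auto
  have "(\<Sum>yt\<in>label_vectors q. noise_prob q rho y yt * L_r_tilde q \<phi> rho t yt)
     = (\<Sum>p\<in>?S. \<Sum>yt\<in>label_vectors q. noise_prob q rho y yt *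
          psi_tilde \<phi> rho (fst p) (snd p) (t (fst p) - t (snd p)) (yt (fst p)) (yt (snd p)))"
    unfolding L_r_tilde_def by (simp add: sum_distrib_left sum.swap[of _ "label_vectors q"] case_prod_beta)
  also have "\<dots> = (\<Sum>p\<in>?S. (if y (fst p) = 1 \<and> y (snd p) = -1 then \<phi> (t (fst p) - t (snd p)) else 0)
      + (if y (fst p) = -1 \<and> y (snd p) = 1 then \<phi> (t (snd p) - t (fst p)) else 0))"
  proof (rule sum.cong)
    fix p assume p: "p \<in> ?S"
    obtain j k where pjk: "p = (j,k)" by (cases p)
    have jk: "j \<in> {1..q}" "k \<in> {1..q}" "j \<noteq> k" using p pjk by auto
    have yjk: "y j \<in> {-1,1}" "y k \<in> {-1,1}" using y jk unfolding label_vectors_def by (auto simp: PiE_iff)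
    have n: "rho 1 j + rho (-1) j \<noteq> 1" "rho 1 k + rho (-1) k \<noteq> 1" using rho_sum jk by (auto simp del: atLeastAtMost_iff) (metis less_irrefl)+
    show "(\<Sum>yt\<in>label_vectors q. noise_prob q rho y yt *
          psi_tilde \<phi> rho (fst p) (snd p) (t (fst p) - t (snd p)) (yt (fst p)) (yt (snd p))) =
       (if y (fst p) = 1 \<and> y (snd p) = -1 then \<phi> (t (fst p) - t (snd p)) else 0)
      + (if y (fst p) = -1 \<and> y (snd p) = 1 then \<phi> (t (snd p) - t (fst p)) else 0)"
      unfolding pjk fst_conv snd_conv per_pair[OF y jk] pair[OF n yjk] by simp
  qed simp
  also have "\<dots> = L_r q \<phi> t y"
    unfolding L_r_def by (simp add: case_prod_beta)
  finally show ?thesis .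
qed
end
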